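(* Let $g,h$ be non-identical monotone linear functions. Then: (i) $\theta(h)-\theta(g)\in(0,\pi)_{2\pi}$ $\iff$ $\theta(h\circ g)\in(\theta(g),\theta(h))_{2\pi}$ $\iff$ $\theta(g\circ h)\in(\theta(g),\theta(h))_{2\pi}$. (ii) $\theta(h)-\theta(g)\in\{0,\pi\}_{2\pi}$ $\iff$ $\theta(h\circ g)\in\{\theta(g),\theta(h),\bot\}$ $\iff$ $\theta(g\circ h)\in\{\theta(g),\theta(h),\bot\}$. (iii) If $\theta(h)=\theta(g)$ then $\theta(h\circ g)=\theta(g\circ h)=\theta(h)$. (iv) $\theta(h\circ g)=\bot\iff\theta(g\circ h)=\bot$, and either of these implies $\theta(h)-\theta(g)=_{2\pi}\pi$.
   Context: A linear function is $f(x)=ax+b$, $a,b\in\mathbb{R}$; it is monotone if $a>0$ and identical if $f(x)=x$. The vector of $f$ is $\vec f=(b,1-a)^\top$ and $\theta(f)\in[0,2\pi)$ is its polar angle, with $\theta(f)=\bot$ if $\vec f=0$. $\theta_1=_{2\pi}\theta_2$ means $\theta_1-\theta_2\in2\pi\mathbb{Z}$; $(\theta_1,\theta_2)_{2\pi}=\{\theta\in(\lambda_1,\lambda_2)\mid\lambda_1=_{2\pi}\theta_1,\lambda_2=_{2\pi}\theta_2,\lambda_2-\lambda_1\in[0,2\pi)\}$; for a set $S$, $S_{2\pi}=\{\theta\mid\theta=_{2\pi}\lambda,\ \lambda\in S\}$. *)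

theory Defs
  imports Complex_Main
begin

definition linear_fun :: "(real \<Rightarrow> real) \<Rightarrow> bool" where
  "linear_fun f \<longleftrightarrow> (\<exists>a b. f = (\<lambda>x. a * x + b))"

definition monotone_linear :: "(real \<Rightarrow> real) \<Rightarrow> bool" where
  "monotone_linear f \<longleftrightarrow> (\<exists>a b. a > 0 \<and> f = (\<lambda>x. a * x + b))"

definition identical :: "(real \<Rightarrow> real) \<Rightarrow> bool" where
  "identical f \<longleftrightarrow> (\<forall>x. f x = x)"

definition lin_slope :: "(real \<Rightarrow> real) \<Rightarrow> real" where
  "lin_slope f = f 1 - f 0"

definition lin_icpt :: "(real \<Rightarrow> real) \<Rightarrow> real" where
  "lin_icpt f = f 0"

definition lin_vec :: "(real \<Rightarrow> real) \<Rightarrow> real \<times> real" where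
  "lin_vec f = (lin_icpt f, 1 - lin_slope f)"

definition polar_angle :: "real \<times> real \<Rightarrow> real" where
  "polar_angle v = (THE t. 0 \<le> t \<and> t < 2 * pi \<and>
      fst v = sqrt (fst v ^ 2 + snd v ^ 2) * cos t \<and>
      snd v = sqrt (fst v ^ 2 + snd v ^ 2) * sin t)"

text \<open>theta f; None plays the role of bottom (vector of f is zero).\<close>
definition theta :: "(real \<Rightarrow> real) \<Rightarrow> real option" where
  "theta f = (if lin_vec f = (0, 0) then None else Some (polar_angle (lin_vec f)))"

definition eq2pi :: "real \<Rightarrow> real \<Rightarrow> bool" where
  "eq2pi x y \<longleftrightarrow> (\<exists>k::int. x - y = 2 * pi * of_int k)"

definition arc2pi :: "real \<Rightarrow> real \<Rightarrow> real set" where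
  "arc2pi t1 t2 = {t. \<exists>l1 l2. eq2pi l1 t1 \<and> eq2pi l2 t2 \<and> 0 \<le> l2 - l1 \<and> l2 - l1 < 2 * pi
                         \<and> l1 < t \<and> t < l2}"

definition set2pi :: "real set \<Rightarrow> real set" where
  "set2pi S = {t. \<exists>l\<in>S. eq2pi t l}"

end

theory Submission imports Defs begin

lemma sin_shift: "sin (x + 2*pi*of_int k) = sin x"
  by (simp add: sin_add)

lemma angle_unique:
  assumes "0 \<le> t" "t < 2*pi" "0 \<le> t'" "t' < 2*pi" "cos t = cos t'" "sin t = sin t'"
  shows "t = t'"
proof -
  obtain n::int where n: "t = t' + 2*pi*n" using sin_cos_eq_iff assms(5,6) by metis
  have "2*pi*n < 2*pi*1" "2*pi*(-1) < 2*pi*n" using n assms(1-4) by linarith+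
  hence "real_of_int n < 1" "-1 < real_of_int n" using pi_gt_zero
    by (metis mult_less_cancel_left_pos mult_pos_pos zero_less_numeral)+
  hence "n < 1" "-1 < n" by linarith+
  hence "n = 0" by simp
  thus ?thesis using n by simp
qed

lemma polar_char:
  assumes "r > 0" "0 \<le> t" "t < 2*pi"
  shows "polar_angle (r*cos t, r*sin t) = t"
proof -
  have sq: "sqrt ((r*cos t)^2 + (r*sin t)^2) = r"
  proof -
    have "(r*cos t)^2 + (r*sin t)^2 = r^2 * ((sin t)^2 + (cos t)^2)" by (simp only: distrib_left power_mult_distrib add.commute)
    also have "\<dots> = r^2" by (simp only: sin_cos_squared_add mult_1_right)
    finally show ?thesis using assms(1) by simp
  qed
  show ?thesis unfolding polar_angle_def fst_conv snd_conv sq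
  proof (rule the_equality)
    show "0 \<le> t \<and> t < 2 * pi \<and> r * cos t = r * cos t \<and> r * sin t = r * sin t" using assms by simp
  next
    fix t' assume "0 \<le> t' \<and> t' < 2 * pi \<and> r * cos t = r * cos t' \<and> r * sin t = r * sin t'"
    then show "t' = t" using angle_unique[of t' t] assms by auto
  qed
qed

lemma polar_ex:
  assumes "(x,y) \<noteq> ((0::real),(0::real))"
  shows "\<exists>r>0. x = r * cos (polar_angle (x,y)) \<and> y = r * sin (polar_angle (x,y))
          \<and> 0 \<le> polar_angle (x,y) \<and> polar_angle (x,y) < 2*pi"
proof -
  define r where "r = sqrt (x^2+y^2)"
  have "x^2+y^2 > 0" using assms by (auto simp: sum_power2_gt_zero_iff)
  hence r: "r > 0" "r^2 = x^2+y^2" unfolding r_def by auto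
  have "(x/r)^2 + (y/r)^2 = (x^2+y^2)/r^2" by (simp add: power_divide add_divide_distrib)
  hence "(x/r)^2 + (y/r)^2 = 1" using r \<open>x^2+y^2 > 0\<close> assms by simp
  then obtain t where t: "0 \<le> t" "t < 2*pi" "x/r = cos t" "y/r = sin t" by (rule sincos_total_2pi)
  hence xy: "x = r*cos t" "y = r * sin t" using r by (auto simp: field_simps)
  have "polar_angle (x,y) = t" using polar_char[OF r(1) t(1,2)] xy by simp
  thus ?thesis using xy r t by auto
qed

lemma polar_scale:
  assumes "k > 0" "(x,y) \<noteq> ((0::real),(0::real))"
  shows "polar_angle (k*x, k*y) = polar_angle (x,y)"
proof -
  obtain r where r: "r>0" "x = r * cos (polar_angle (x,y))" "y = r * sin (polar_angle (x,y))"
    "0 \<le> polar_angle (x,y)" "polar_angle (x,y) < 2*pi" using polar_ex[OF assms(2)] by blast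
  have "polar_angle ((k*r)*cos (polar_angle (x,y)), (k*r)*sin (polar_angle (x,y))) = polar_angle (x,y)"
    using r assms(1) by (intro polar_char) auto
  thus ?thesis using r by (simp add: mult.assoc)
qed

lemma polar_cross:
  assumes "(x,y) \<noteq> ((0::real),(0::real))" "(u,w) \<noteq> ((0::real),(0::real))"
  shows "\<exists>p>0. x*w - y*u = p * sin (polar_angle (u,w) - polar_angle (x,y))"
proof -
  obtain r where r: "r>0" "x = r * cos (polar_angle (x,y))" "y = r * sin (polar_angle (x,y))"
    using polar_ex[OF assms(1)] by blast
  obtain r' where r': "r'>0" "u = r' * cos (polar_angle (u,w))" "w = r' * sin (polar_angle (u,w))"
    using polar_ex[OF assms(2)] by blast
  have "x*w - y*u = (r*r') * sin (polar_angle (u,w) - polar_angle (x,y))"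
  proof -
    define A where "A = polar_angle (x,y)"
    define B where "B = polar_angle (u,w)"
    have "x = r*cos A" "y = r*sin A" "u = r'*cos B" "w = r'*sin B" using r r' unfolding A_def B_def by auto
    thus ?thesis unfolding A_def[symmetric] B_def[symmetric] by (simp add: sin_diff algebra_simps)
  qed
  thus ?thesis using r r' by (intro exI[of _ "r*r'"]) auto
qed

lemma polar_neg:
  assumes "(x,y) \<noteq> ((0::real),(0::real))"
  shows "eq2pi (polar_angle (-x,-y) - polar_angle (x,y)) pi"
proof -
  define a where "a = polar_angle (x,y)"
  obtain r where r: "r>0" "x = r * cos a" "y = r * sin a" "0 \<le> a" "a < 2*pi"
    using polar_ex[OF assms(1)] unfolding a_def by blast
  show ?thesis
  proof (cases "a < pi")
    case True
    have "polar_angle (r*cos (a+pi), r*sin (a+pi)) = a + pi" using r True by (intro polar_char) auto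
    hence "polar_angle (-x,-y) = a + pi" using r by simp
    thus ?thesis unfolding eq2pi_def a_def[symmetric] by (intro exI[of _ 0]) simp
  next
    case False
    have "polar_angle (r*cos (a-pi), r*sin (a-pi)) = a - pi" using r False by (intro polar_char) auto
    hence "polar_angle (-x,-y) = a - pi" using r by (simp add: sin_diff cos_diff)
    thus ?thesis unfolding eq2pi_def a_def[symmetric] by (intro exI[of _ "-1"]) simp
  qed
qed

lemma sin_pos_red:
  assumes "sin x > 0"
  shows "\<exists>k::int. 0 < x - 2*pi*k \<and> x - 2*pi*k < pi"
proof -
  define k where "k = \<lfloor>x/(2*pi)\<rfloor>"
  define u where "u = x - 2*pi*k"
  have "k \<le> x/(2*pi)" "x/(2*pi) < k + 1" unfolding k_def by linarith+
  hence "2*pi*k \<le> x" "x < 2*pi*(k+1)" by (simp_all add: field_simps)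
  hence u: "0 \<le> u" "u < 2*pi" unfolding u_def by (simp_all add: algebra_simps)
  have "sin u = sin x" using sin_shift[of u k] unfolding u_def by simp
  hence su: "sin u > 0" using assms by simp
  have "u \<noteq> 0" using su by auto
  moreover have "u < pi" using sin_le_zero[of u] su u by force
  ultimately show ?thesis using u unfolding u_def by (intro exI[of _ k]) auto
qed

lemma arc_in:
  assumes "sin (t - a) > 0" "sin (b - t) > 0"
  shows "t \<in> arc2pi a b"
proof -
  obtain k1::int where k1: "0 < t - a - 2*pi*k1" "t - a - 2*pi*k1 < pi" using sin_pos_red[OF assms(1)] by blast
  obtain k2::int where k2: "0 < b - t - 2*pi*k2" "b - t - 2*pi*k2 < pi" using sin_pos_red[OF assms(2)] by blast
  show ?thesis unfolding arc2pi_def eq2pi_def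
    apply (rule CollectI)
    apply (rule exI[of _ "a + 2*pi*k1"], rule exI[of _ "b - 2*pi*k2"])
    using k1 k2 apply (intro conjI)
         apply (rule exI[of _ k1], simp)
        apply (rule exI[of _ "-k2"], simp)
    by linarith+
qed

lemma arc_out:
  assumes "t \<in> arc2pi a b" "sin (t - a) \<le> 0" "sin (b - t) \<le> 0"
  shows False
proof -
  obtain l1 l2 k1 k2 where l: "l1 - a = 2*pi*of_int k1" "l2 - b = 2*pi*of_int k2"
    "l2 - l1 < 2*pi" "l1 < t" "t < l2"
    using assms(1) unfolding arc2pi_def eq2pi_def by blast
  have "sin (t - l1) = sin (t - a)" using sin_shift[of "t-l1" k1] l(1) by (simp add: algebra_simps)
  hence "\<not> (t - l1 < pi)" using sin_gt_zero[of "t-l1"] assms(2) l by auto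
  moreover have "sin (l2 - t) = sin (b - t)" using sin_shift[of "b-t" k2] l(2) by (simp add: algebra_simps)
  hence "\<not> (l2 - t < pi)" using sin_gt_zero[of "l2-t"] assms(3) l by auto
  ultimately show False using l by linarith
qed

lemma set2pi_sin: "t \<in> set2pi {0, pi} \<longleftrightarrow> sin t = 0"
proof
  assume "t \<in> set2pi {0, pi}"
  then obtain k::int where "t = 2*pi*k \<or> t = pi + 2*pi*k" unfolding set2pi_def eq2pi_def
    by (auto simp: algebra_simps)
  thus "sin t = 0" using sin_shift[of pi k] by (auto simp: add.commute)
next
  assume "sin t = 0"
  then obtain i::int where i: "t = of_int i * pi" using sin_zero_iff_int2 by blast
  show "t \<in> set2pi {0, pi}"
  proof (cases "even i")
    case True
    then obtain j where "i = 2*j" by blast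
    thus ?thesis using i unfolding set2pi_def eq2pi_def by (auto intro!: exI[of _ j])
  next
    case False
    then obtain j where "i = 2*j+1" using oddE by blast
    thus ?thesis using i unfolding set2pi_def eq2pi_def by (auto intro!: exI[of _ j] simp: algebra_simps)
  qed
qed

definition vtheta :: "real \<times> real \<Rightarrow> real option" where
  "vtheta v = (if v = (0, 0) then None else Some (polar_angle v))"

lemma theta_vtheta: "theta f = vtheta (lin_vec f)"
  unfolding theta_def vtheta_def by simp

lemma par_ex:
  assumes "(x1,y1) \<noteq> ((0::real),(0::real))" "x1*y2 - y1*x2 = 0"
  shows "\<exists>l. x2 = l*x1 \<and> y2 = l*y1"
proof (cases "x1 = 0")
  case True
  hence "y1 \<noteq> 0" using assms(1) by auto
  thus ?thesis using assms True by (intro exI[of _ "y2/y1"]) (auto simp: field_simps)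
next
  case False
  thus ?thesis using assms by (intro exI[of _ "x2/x1"]) (auto simp: field_simps)
qed

lemma W_pos:
  assumes "(x1,y1) \<noteq> ((0::real),(0::real))" "k > 0"
  shows "vtheta (k*x1, k*y1) = vtheta (x1,y1)"
  using assms polar_scale[OF assms(2,1)] unfolding vtheta_def by auto

lemma gen_a:
  fixes x1 y1 x2 y2 m n wx wy :: real
  assumes nz: "(x1,y1) \<noteq> (0,0)" "(x2,y2) \<noteq> (0,0)" and mn: "m>0" "n>0"
    and w: "wx = m*x1+n*x2" "wy = m*y1+n*y2"
  shows "(\<exists>t. vtheta (wx,wy) = Some t \<and> t \<in> arc2pi (polar_angle (x1,y1)) (polar_angle (x2,y2)))
          \<longleftrightarrow> x1*y2 - y1*x2 > 0"
proof -
  define s where "s = x1*y2 - y1*x2"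
  have c1: "x1*wy - y1*wx = n*s" and c2: "wx*y2 - wy*x2 = m*s" unfolding s_def w by algebra+
  show ?thesis unfolding s_def[symmetric]
  proof
    assume "\<exists>t. vtheta (wx,wy) = Some t \<and> t \<in> arc2pi (polar_angle (x1,y1)) (polar_angle (x2,y2))"
    then obtain t where t: "vtheta (wx,wy) = Some t" "t \<in> arc2pi (polar_angle (x1,y1)) (polar_angle (x2,y2))" by blast
    have wnz: "(wx,wy) \<noteq> (0,0)" and tt: "t = polar_angle (wx,wy)" using t(1) unfolding vtheta_def by (auto split: if_splits)
    show "s > 0"
    proof (rule ccontr)
      assume "\<not> s > 0"
      hence sl: "s \<le> 0" by simp
      obtain p where p: "p > 0" "x1*wy - y1*wx = p * sin (t - polar_angle (x1,y1))"
        using polar_cross[OF nz(1) wnz] tt by blast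
      obtain q where q: "q > 0" "wx*y2 - wy*x2 = q * sin (polar_angle (x2,y2) - t)"
        using polar_cross[OF wnz nz(2)] tt by blast
      have "n*s \<le> 0" "m*s \<le> 0" using sl mn by (simp_all add: mult_nonneg_nonpos)
      hence "sin (t - polar_angle (x1,y1)) \<le> 0" "sin (polar_angle (x2,y2) - t) \<le> 0"
        using p q c1 c2 by (metis mult_le_0_iff not_le)+
      thus False using arc_out t(2) by blast
    qed
  next
    assume sp: "s > 0"
    have wnz: "(wx,wy) \<noteq> (0,0)" using c1 sp mn by auto
    obtain p where p: "p > 0" "x1*wy - y1*wx = p * sin (polar_angle (wx,wy) - polar_angle (x1,y1))"
      using polar_cross[OF nz(1) wnz] by blast
    obtain q where q: "q > 0" "wx*y2 - wy*x2 = q * sin (polar_angle (x2,y2) - polar_angle (wx,wy))"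
      using polar_cross[OF wnz nz(2)] by blast
    have "n*s > 0" "m*s > 0" using sp mn by simp_all
    hence "sin (polar_angle (wx,wy) - polar_angle (x1,y1)) > 0" "sin (polar_angle (x2,y2) - polar_angle (wx,wy)) > 0"
      using p q c1 c2 by (metis zero_less_mult_iff not_less_iff_gr_or_eq)+
    hence "polar_angle (wx,wy) \<in> arc2pi (polar_angle (x1,y1)) (polar_angle (x2,y2))" by (rule arc_in)
    thus "\<exists>t. vtheta (wx,wy) = Some t \<and> t \<in> arc2pi (polar_angle (x1,y1)) (polar_angle (x2,y2))"
      using wnz unfolding vtheta_def by auto
  qed
qed

lemma gen_lam:
  fixes x1 y1 x2 y2 m n wx wy l :: real
  assumes nz: "(x1,y1) \<noteq> (0,0)" "(x2,y2) \<noteq> (0,0)" and mn: "m>0" "n>0"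
    and w: "wx = m*x1+n*x2" "wy = m*y1+n*y2" and l: "x2 = l*x1" "y2 = l*y1"
  shows "vtheta (wx,wy) \<in> {vtheta (x1,y1), vtheta (x2,y2), None}"
proof -
  have W: "wx = (m+n*l)*x1" "wy = (m+n*l)*y1" using w l by (simp_all add: algebra_simps)
  consider "m+n*l > 0" | "m+n*l = 0" | "m+n*l < 0" by linarith
  thus ?thesis
  proof cases
    case 1 thus ?thesis using W_pos[OF nz(1) 1] W by simp
  next
    case 2 thus ?thesis using W unfolding vtheta_def by simp
  next
    case 3
    have "l < 0" using 3 mn by (metis add_pos_nonneg less_le_not_le mult_nonneg_nonneg not_le)
    hence "x1 = (1/l)*x2" "y1 = (1/l)*y2" using l by simp_all
    hence "wx = ((m+n*l)/l)*x2" "wy = ((m+n*l)/l)*y2" using W by simp_all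
    moreover have "(m+n*l)/l > 0" using 3 \<open>l<0\<close> by (simp add: divide_neg_neg)
    ultimately have "vtheta (wx,wy) = vtheta (x2,y2)" using W_pos[OF nz(2), of "(m+n*l)/l"] by simp
    thus ?thesis by simp
  qed
qed

lemma gen_b:
  fixes x1 y1 x2 y2 m n wx wy :: real
  assumes nz: "(x1,y1) \<noteq> (0,0)" "(x2,y2) \<noteq> (0,0)" and mn: "m>0" "n>0"
    and w: "wx = m*x1+n*x2" "wy = m*y1+n*y2"
  shows "vtheta (wx,wy) \<in> {vtheta (x1,y1), vtheta (x2,y2), None} \<longleftrightarrow> x1*y2 - y1*x2 = 0"
proof -
  define s where "s = x1*y2 - y1*x2"
  have c1: "x1*wy - y1*wx = n*s" and c2: "wx*y2 - wy*x2 = m*s" unfolding s_def w by algebra+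
  show ?thesis unfolding s_def[symmetric]
  proof
    assume A: "vtheta (wx,wy) \<in> {vtheta (x1,y1), vtheta (x2,y2), None}"
    show "s = 0"
    proof (rule ccontr)
      assume s0: "s \<noteq> 0"
      have wnz: "(wx,wy) \<noteq> (0,0)" using c1 s0 mn by auto
      obtain p where p: "p > 0" "x1*wy - y1*wx = p * sin (polar_angle (wx,wy) - polar_angle (x1,y1))"
        using polar_cross[OF nz(1) wnz] by blast
      obtain q where q: "q > 0" "wx*y2 - wy*x2 = q * sin (polar_angle (x2,y2) - polar_angle (wx,wy))"
        using polar_cross[OF wnz nz(2)] by blast
      from A wnz nz have "polar_angle (wx,wy) = polar_angle (x1,y1) \<or> polar_angle (wx,wy) = polar_angle (x2,y2)"
        unfolding vtheta_def by auto
      thus False using p q c1 c2 s0 mn by auto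
    qed
  next
    assume "s = 0"
    then obtain l where "x2 = l*x1" "y2 = l*y1" using par_ex[OF nz(1)] unfolding s_def by blast
    thus "vtheta (wx,wy) \<in> {vtheta (x1,y1), vtheta (x2,y2), None}" using gen_lam[OF nz mn w] by blast
  qed
qed

lemma gen_c:
  fixes x1 y1 x2 y2 m n wx wy :: real
  assumes nz: "(x1,y1) \<noteq> (0,0)" "(x2,y2) \<noteq> (0,0)" and mn: "m>0" "n>0"
    and w: "wx = m*x1+n*x2" "wy = m*y1+n*y2"
    and eq: "polar_angle (x2,y2) = polar_angle (x1,y1)"
  shows "vtheta (wx,wy) = vtheta (x1,y1)"
proof -
  obtain r1 where r1: "r1>0" "x1 = r1 * cos (polar_angle (x1,y1))" "y1 = r1 * sin (polar_angle (x1,y1))"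
    using polar_ex[OF nz(1)] by blast
  obtain r2 where r2: "r2>0" "x2 = r2 * cos (polar_angle (x1,y1))" "y2 = r2 * sin (polar_angle (x1,y1))"
    using polar_ex[OF nz(2)] eq by auto
  have l: "x2 = (r2/r1)*x1" "y2 = (r2/r1)*y1" using r1 r2 by (metis nonzero_eq_divide_eq order_less_irrefl times_divide_eq_left mult.commute)+
  have W: "wx = (m+n*(r2/r1))*x1" "wy = (m+n*(r2/r1))*y1" using w l by (simp_all add: algebra_simps)
  have "m+n*(r2/r1) > 0" using mn r1 r2 by (simp add: add_pos_pos)
  thus ?thesis using W_pos[OF nz(1)] W by simp
qed

theorem mainTheorem7:
  fixes g h :: "real \<Rightarrow> real"
  assumes "monotone_linear g" and "monotone_linear h"
    and "\<not> identical g" and "\<not> identical h"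
  shows
   "((the (theta h) - the (theta g) \<in> arc2pi 0 pi
       \<longleftrightarrow> (\<exists>t. theta (h \<circ> g) = Some t \<and> t \<in> arc2pi (the (theta g)) (the (theta h))))
     \<and> ((\<exists>t. theta (h \<circ> g) = Some t \<and> t \<in> arc2pi (the (theta g)) (the (theta h)))
       \<longleftrightarrow> (\<exists>t. theta (g \<circ> h) = Some t \<and> t \<in> arc2pi (the (theta g)) (the (theta h)))))
  \<and> ((the (theta h) - the (theta g) \<in> set2pi {0, pi}
       \<longleftrightarrow> theta (h \<circ> g) \<in> {theta g, theta h, None})
     \<and> (theta (h \<circ> g) \<in> {theta g, theta h, None}
       \<longleftrightarrow> theta (g \<circ> h) \<in> {theta g, theta h, None}))
  \<and> (theta h = theta g \<longrightarrow> theta (h \<circ> g) = theta h \<and> theta (g \<circ> h) = theta h)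
  \<and> ((theta (h \<circ> g) = None \<longleftrightarrow> theta (g \<circ> h) = None)
     \<and> (theta (h \<circ> g) = None \<longrightarrow> eq2pi (the (theta h) - the (theta g)) pi))"
proof -
  obtain a b where ab: "a > 0" "g = (\<lambda>x. a*x+b)" using assms(1) unfolding monotone_linear_def by blast
  obtain c d where cd: "c > 0" "h = (\<lambda>x. c*x+d)" using assms(2) unfolding monotone_linear_def by blast
  have vg: "lin_vec g = (b, 1-a)" using ab by (simp add: lin_vec_def lin_icpt_def lin_slope_def)
  have vh: "lin_vec h = (d, 1-c)" using cd by (simp add: lin_vec_def lin_icpt_def lin_slope_def)
  have vhg: "lin_vec (h \<circ> g) = (c*b + 1*d, c*(1-a) + 1*(1-c))" using ab cd
    by (simp add: lin_vec_def lin_icpt_def lin_slope_def algebra_simps)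
  have vgh: "lin_vec (g \<circ> h) = (1*b + a*d, 1*(1-a) + a*(1-c))" using ab cd
    by (simp add: lin_vec_def lin_icpt_def lin_slope_def algebra_simps)
  have nzg: "(b, 1-a) \<noteq> (0,0)"
  proof
    assume "(b, 1-a) = (0,0)"
    hence "b = 0" "a = 1" by auto
    thus False using assms(3) ab unfolding identical_def by simp
  qed
  have nzh: "(d, 1-c) \<noteq> (0,0)"
  proof
    assume "(d, 1-c) = (0,0)"
    hence "d = 0" "c = 1" by auto
    thus False using assms(4) cd unfolding identical_def by simp
  qed
  define \<alpha> where "\<alpha> = polar_angle (b, 1-a)"
  define \<beta> where "\<beta> = polar_angle (d, 1-c)"
  define s where "s = b*(1-c) - (1-a)*d"
  have tg: "theta g = Some \<alpha>" using nzg vg unfolding theta_vtheta vtheta_def \<alpha>_def by simp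
  have th: "theta h = Some \<beta>" using nzh vh unfolding theta_vtheta vtheta_def \<beta>_def by simp
  have thg: "theta (h \<circ> g) = vtheta (c*b + 1*d, c*(1-a) + 1*(1-c))" using vhg theta_vtheta by simp
  have tgh: "theta (g \<circ> h) = vtheta (1*b + a*d, 1*(1-a) + a*(1-c))" using vgh theta_vtheta by simp
  obtain p where p: "p > 0" "s = p * sin (\<beta> - \<alpha>)"
    using polar_cross[OF nzg nzh] unfolding s_def \<alpha>_def \<beta>_def by blast
  note ga1 = gen_a[OF nzg nzh cd(1) zero_less_one refl refl]
  note ga2 = gen_a[OF nzg nzh zero_less_one ab(1) refl refl]
  note gb1 = gen_b[OF nzg nzh cd(1) zero_less_one refl refl]
  note gb2 = gen_b[OF nzg nzh zero_less_one ab(1) refl refl]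
  have arc0: "\<beta> - \<alpha> \<in> arc2pi 0 pi \<longleftrightarrow> s > 0"
  proof
    assume A: "\<beta> - \<alpha> \<in> arc2pi 0 pi"
    show "s > 0"
    proof (rule ccontr)
      assume "\<not> s > 0"
      hence "sin (\<beta> - \<alpha>) \<le> 0" using p by (metis mult_pos_pos not_le)
      thus False using arc_out[OF A] by simp
    qed
  next
    assume "s > 0"
    hence "sin (\<beta> - \<alpha>) > 0" using p by (metis zero_less_mult_iff not_less_iff_gr_or_eq)
    thus "\<beta> - \<alpha> \<in> arc2pi 0 pi" by (intro arc_in) simp_all
  qed
  have P1: "(the (theta h) - the (theta g) \<in> arc2pi 0 pi
       \<longleftrightarrow> (\<exists>t. theta (h \<circ> g) = Some t \<and> t \<in> arc2pi (the (theta g)) (the (theta h))))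
     \<and> ((\<exists>t. theta (h \<circ> g) = Some t \<and> t \<in> arc2pi (the (theta g)) (the (theta h)))
       \<longleftrightarrow> (\<exists>t. theta (g \<circ> h) = Some t \<and> t \<in> arc2pi (the (theta g)) (the (theta h))))"
    using arc0 ga1 ga2 unfolding tg th thg tgh \<alpha>_def[symmetric] \<beta>_def[symmetric] s_def
    by (simp add: algebra_simps)
  have sin0: "sin (\<beta> - \<alpha>) = 0 \<longleftrightarrow> s = 0" using p by simp
  have P2: "(the (theta h) - the (theta g) \<in> set2pi {0, pi}
       \<longleftrightarrow> theta (h \<circ> g) \<in> {theta g, theta h, None})
     \<and> (theta (h \<circ> g) \<in> {theta g, theta h, None}
       \<longleftrightarrow> theta (g \<circ> h) \<in> {theta g, theta h, None})"
  proof -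
    have e1: "theta g = vtheta (b,1-a)" "theta h = vtheta (d,1-c)" using vg vh theta_vtheta by simp_all
    show ?thesis unfolding e1 thg tgh gb1 gb2
      using set2pi_sin[of "\<beta> - \<alpha>"] sin0 tg th unfolding e1 s_def by (simp add: algebra_simps)
  qed
  have P3: "theta h = theta g \<longrightarrow> theta (h \<circ> g) = theta h \<and> theta (g \<circ> h) = theta h"
  proof
    assume "theta h = theta g"
    hence eq: "\<beta> = \<alpha>" using tg th by simp
    have "vtheta (c*b + 1*d, c*(1-a) + 1*(1-c)) = vtheta (b,1-a)"
      by (rule gen_c[OF nzg nzh cd(1) zero_less_one refl refl]) (use eq \<alpha>_def \<beta>_def in simp)
    moreover have "vtheta (1*b + a*d, 1*(1-a) + a*(1-c)) = vtheta (b,1-a)"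
      by (rule gen_c[OF nzg nzh zero_less_one ab(1) refl refl]) (use eq \<alpha>_def \<beta>_def in simp)
    ultimately show "theta (h \<circ> g) = theta h \<and> theta (g \<circ> h) = theta h"
      using thg tgh vg theta_vtheta \<open>theta h = theta g\<close> by simp
  qed
  have N1: "theta (h \<circ> g) = None \<longleftrightarrow> (a*c = 1 \<and> d = -(c*b))"
  proof -
    have "theta (h \<circ> g) = None \<longleftrightarrow> c*b + d = 0 \<and> c*(1-a) + (1-c) = 0"
      unfolding thg vtheta_def by simp
    also have "\<dots> \<longleftrightarrow> (a*c = 1 \<and> d = -(c*b))" by (auto simp: algebra_simps)
    finally show ?thesis .
  qed
  have N2: "theta (g \<circ> h) = None \<longleftrightarrow> (a*c = 1 \<and> d = -(c*b))"
  proof -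
    have "theta (g \<circ> h) = None \<longleftrightarrow> b + a*d = 0 \<and> (1-a) + a*(1-c) = 0"
      unfolding tgh vtheta_def by simp
    also have "\<dots> \<longleftrightarrow> (a*c = 1 \<and> d = -(c*b))"
    proof
      assume A: "b + a*d = 0 \<and> (1-a) + a*(1-c) = 0"
      hence ac: "a*c = 1" by (simp add: algebra_simps)
      have "c*(b + a*d) = 0" using A by simp
      hence "c*b + (a*c)*d = 0" by (simp add: algebra_simps)
      thus "a*c = 1 \<and> d = -(c*b)" using ac by simp
    next
      assume A: "a*c = 1 \<and> d = -(c*b)"
      hence "b + a*d = b - (a*c)*b" by (simp add: algebra_simps)
      thus "b + a*d = 0 \<and> (1-a) + a*(1-c) = 0" using A by (simp add: algebra_simps)
    qed
    finally show ?thesis .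
  qed
  have P4: "theta (h \<circ> g) = None \<longrightarrow> eq2pi (the (theta h) - the (theta g)) pi"
  proof
    assume "theta (h \<circ> g) = None"
    hence A: "a*c = 1" "d = -(c*b)" using N1 by auto
    have "1 - c = c*(-(1-a))" using A(1) by (simp add: algebra_simps)
    hence "(d, 1-c) = (c*(-b), c*(-(1-a)))" using A(2) by simp
    moreover have "(-b, -(1-a)) \<noteq> (0,0)" using nzg by simp
    ultimately have "\<beta> = polar_angle (-b, -(1-a))" unfolding \<beta>_def using polar_scale[OF cd(1)] by metis
    thus "eq2pi (the (theta h) - the (theta g)) pi" using polar_neg[OF nzg] tg th \<alpha>_def by simp
  qed
  show ?thesis using P1 P2 P3 P4 N1 N2 by blast
qed

end
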